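(* There are $2^{\mathfrak{c}}$ many pairwise non-isomorphic (as linear orders under the usual order of $\mathbb{R}$) $\mathfrak{c}$-dense subsets of $\mathbb{R}$ that are closed under Turing equivalence.
   Context: $\mathfrak{c}=2^{\aleph_0}$. A set $A\subseteq\mathbb{R}$ is $\mathfrak{c}$-dense if $|I\cap A|=\mathfrak{c}$ for every nonempty open interval $I$. A set of reals is closed under Turing equivalence if it contains every real Turing equivalent to one of its elements. *)

theory Defs
  imports Complex_Main "HOL-Library.Equipollence" "HOL-Library.Nat_Bijection"
begin

text \<open>Codes of partial recursive functions with one oracle gate (Kleene style),
acting on argument lists of natural numbers.\<close>

datatype recf =
    Zr
  | Sc
  | Pj nat
  | Cn recf "recf list"
  | Pr recf recf
  | Mn recf
  | Orc

inductive ev :: "nat set \<Rightarrow> recf \<Rightarrow> nat list \<Rightarrow> nat \<Rightarrow> bool" for X :: "nat set" where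
  ev_Zr: "ev X Zr xs 0"
| ev_Sc: "ev X Sc (x # xs) (Suc x)"
| ev_Pj: "i < length xs \<Longrightarrow> ev X (Pj i) xs (xs ! i)"
| ev_Cn: "length ys = length gs \<Longrightarrow> (\<forall>i < length gs. ev X (gs ! i) xs (ys ! i))
            \<Longrightarrow> ev X f ys z \<Longrightarrow> ev X (Cn f gs) xs z"
| ev_Pr0: "ev X f xs y \<Longrightarrow> ev X (Pr f g) (0 # xs) y"
| ev_PrS: "ev X (Pr f g) (n # xs) y \<Longrightarrow> ev X g (y # n # xs) z
            \<Longrightarrow> ev X (Pr f g) (Suc n # xs) z"
| ev_Mn: "ev X f (n # xs) 0 \<Longrightarrow> (\<forall>m < n. \<exists>k. ev X f (m # xs) (Suc k))
            \<Longrightarrow> ev X (Mn f) xs n"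
| ev_Orc: "ev X Orc (x # xs) (if x \<in> X then 1 else 0)"

definition turing_red :: "nat set \<Rightarrow> nat set \<Rightarrow> bool" where
  "turing_red A B \<longleftrightarrow> (\<exists>p. \<forall>n. ev B p [n] (if n \<in> A then 1 else 0))"

section \<open>Reals as sets of naturals (Dedekind left cuts)\<close>

text \<open>A fixed computable enumeration of the rationals (surjective, with repetitions).\<close>

definition rat_code :: "nat \<Rightarrow> real" where
  "rat_code n = real_of_int (int_decode (fst (prod_decode n))) / real (Suc (snd (prod_decode n)))"

definition left_cut :: "real \<Rightarrow> nat set" where
  "left_cut x = {n. rat_code n < x}"

definition turing_equiv_real :: "real \<Rightarrow> real \<Rightarrow> bool" where
  "turing_equiv_real x y \<longleftrightarrow> turing_red (left_cut x) (left_cut y) \<and> turing_red (left_cut y) (left_cut x)"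

definition turing_closed :: "real set \<Rightarrow> bool" where
  "turing_closed A \<longleftrightarrow> (\<forall>x \<in> A. \<forall>y. turing_equiv_real y x \<longrightarrow> y \<in> A)"

definition c_dense :: "real set \<Rightarrow> bool" where
  "c_dense A \<longleftrightarrow> (\<forall>a b. a < b \<longrightarrow> ({a<..<b} \<inter> A) \<approx> (UNIV :: real set))"

definition order_iso_sets :: "real set \<Rightarrow> real set \<Rightarrow> bool" where
  "order_iso_sets A B \<longleftrightarrow> (\<exists>f. bij_betw f A B \<and> strict_mono_on A f)"

end

theory Submission
  imports Defs "HOL-Library.Countable" "HOL-Analysis.Analysis"
begin
unbundle cardinal_syntax
instance recf :: countable by countable_datatype

inductive_cases evZrE: "ev X Zr xs y"
inductive_cases evScE: "ev X Sc xs y"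
inductive_cases evPjE: "ev X (Pj i) xs y"
inductive_cases evCnE: "ev X (Cn f gs) xs y"
inductive_cases evPr0E: "ev X (Pr f g) (0 # xs) y"
inductive_cases evPrSE: "ev X (Pr f g) (Suc n # xs) y"
inductive_cases evMnE: "ev X (Mn f) xs y"
inductive_cases evOrcE: "ev X Orc xs y"

lemma ev_det: "ev X f xs y \<Longrightarrow> ev X f xs y' \<Longrightarrow> y = y'"
proof (induction arbitrary: y' rule: ev.induct)
  case (ev_Zr xs)
  then show ?case by (auto elim: evZrE)
next
  case (ev_Sc x xs)
  then show ?case by (auto elim: evScE)
next
  case (ev_Pj i xs)
  then show ?case by (auto elim: evPjE)
next
  case (ev_Cn ys gs xs f z)
  from ev_Cn.prems obtain ys' where l: "length ys' = length gs"
    and a: "\<forall>i<length gs. ev X (gs ! i) xs (ys' ! i)" and b: "ev X f ys' y'"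
    by (auto elim: evCnE)
  have "ys = ys'"
    by (rule nth_equalityI) (use ev_Cn.hyps(1) ev_Cn.IH(1) l a in auto)
  then show ?case using ev_Cn.IH(2) b by blast
next
  case (ev_Pr0 f xs y g)
  from ev_Pr0.prems have "ev X f xs y'" by (rule evPr0E)
  then show ?case using ev_Pr0.IH by blast
next
  case (ev_PrS f g n xs y z)
  from ev_PrS.prems obtain y2 where "ev X (Pr f g) (n # xs) y2" "ev X g (y2 # n # xs) y'"
    by (rule evPrSE) blast
  then show ?case using ev_PrS.IH by metis
next
  case (ev_Mn f n xs)
  from ev_Mn.prems have h0: "ev X f (y' # xs) 0" and
     h1: "\<forall>m<y'. \<exists>k. ev X f (m # xs) (Suc k)" by (auto elim: evMnE)
  show ?case
  proof (rule linorder_cases[of n y'])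
    assume "n < y'"
    then obtain k where "ev X f (n # xs) (Suc k)" using h1 by blast
    then show ?thesis using ev_Mn.IH(1) by fastforce
  next
    assume "y' < n"
    then obtain k where "ev X f (y' # xs) (Suc k)" "\<forall>y''. ev X f (y' # xs) y'' \<longrightarrow> Suc k = y''"
      using ev_Mn.IH(2) by blast
    then show ?thesis using h0 by fastforce
  qed simp
next
  case (ev_Orc x xs)
  then show ?case by (auto elim: evOrcE)
qed

lemma rat_code_surj:
  assumes "q \<in> \<rat>" shows "\<exists>n. rat_code n = q"
proof -
  from assms obtain a b where b: "b > 0" and q: "q = of_int a / of_int b"
    by (auto elim: Rats_cases')
  define n where "n = prod_encode (int_encode a, nat b - 1)"
  have "Suc (nat b - 1) = nat b" using b by simp
  then have "real (Suc (nat b - 1)) = of_int b" using b by simp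
  then have "rat_code n = q" unfolding rat_code_def n_def
    by (simp add: prod_encode_inverse int_encode_inverse q)
  then show ?thesis by blast
qed

lemma left_cut_inj: "inj left_cut"
proof (rule injI)
  fix x y assume eq: "left_cut x = left_cut y"
  show "x = y"
  proof (rule ccontr)
    assume "x \<noteq> y"
    then consider "x < y" | "y < x" by linarith
    then show False
    proof cases
      case 1
      then obtain q where "q \<in> \<rat>" "x < q" "q < y" using Rats_dense_in_real by blast
      then obtain n where "rat_code n = q" using rat_code_surj by blast
      then have "n \<in> left_cut y" "n \<notin> left_cut x" using \<open>x<q\<close> \<open>q<y\<close>
        by (auto simp: left_cut_def)
      then show False using eq by simp
    next
      case 2
      then obtain q where "q \<in> \<rat>" "y < q" "q < x" using Rats_dense_in_real by blast
      then obtain n where "rat_code n = q" using rat_code_surj by blast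
      then have "n \<in> left_cut x" "n \<notin> left_cut y" using \<open>y<q\<close> \<open>q<x\<close>
        by (auto simp: left_cut_def)
      then show False using eq by simp
    qed
  qed
qed

lemma red_unique:
  assumes "\<forall>n. ev B p [n] (if n \<in> A then 1 else 0)"
      and "\<forall>n. ev B p [n] (if n \<in> A' then 1 else 0)"
  shows "A = A'"
proof -
  have eq: "\<And>n. (if n \<in> A then 1 else 0) = (if n \<in> A' then (1::nat) else 0)"
    using assms ev_det by blast
  have "n \<in> A \<longleftrightarrow> n \<in> A'" for n
    using eq[of n] by (cases "n \<in> A"; cases "n \<in> A'") auto
  then show ?thesis by blast
qed

lemma nbhd_countable: "countable {y. turing_equiv_real y x}"
proof -
  let ?S = "\<lambda>p. {y. \<forall>n. ev (left_cut x) p [n] (if n \<in> left_cut y then 1 else 0)}"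
  have sub: "{y. turing_equiv_real y x} \<subseteq> (\<Union>p. ?S p)"
    by (auto simp: turing_equiv_real_def turing_red_def)
  have "countable (?S p)" for p
  proof -
    have "?S p \<subseteq> {y} " if "y \<in> ?S p" for y
    proof
      fix z assume "z \<in> ?S p"
      then have "left_cut z = left_cut y" using that red_unique[of "left_cut x" p] by blast
      then show "z \<in> {y}" using left_cut_inj by (auto dest: injD)
    qed
    show ?thesis
    proof (cases "?S p = {}")
      case False
      then obtain y where "y \<in> ?S p" by blast
      then have "?S p \<subseteq> {y}" by fact
      then show ?thesis using countable_subset by blast
    next
      case True
      show ?thesis by (subst True) simp
    qed
  qed
  then have "countable (\<Union>p. ?S p)" by auto
  then show ?thesis using sub countable_subset by blast
qed

definition E :: "real \<Rightarrow> real \<Rightarrow> bool" where "E = turing_equiv_real\<^sup>*\<^sup>*"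

lemma teq_sym: "turing_equiv_real x y \<Longrightarrow> turing_equiv_real y x"
  by (auto simp: turing_equiv_real_def)

lemma E_sym: "E x y \<Longrightarrow> E y x"
  unfolding E_def
proof (induction rule: rtranclp_induct)
  case base then show ?case by simp
next
  case (step y z)
  then show ?case by (meson converse_rtranclp_into_rtranclp teq_sym)
qed

lemma E_step: "turing_equiv_real y x \<Longrightarrow> E x z \<Longrightarrow> E y z"
  unfolding E_def by (rule converse_rtranclp_into_rtranclp)

lemma E_refl: "E x x" unfolding E_def by simp

lemma pow_countable: "countable {y. (turing_equiv_real ^^ n) y x}"
proof (induction n arbitrary: x)
  case 0 then show ?case by simp
next
  case (Suc n)
  have "{y. (turing_equiv_real ^^ Suc n) y x} \<subseteq> (\<Union>z\<in>{z. turing_equiv_real z x}. {y. (turing_equiv_real ^^ n) y z})"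
    by auto
  moreover have "countable (\<Union>z\<in>{z. turing_equiv_real z x}. {y. (turing_equiv_real ^^ n) y z})"
    using Suc nbhd_countable by blast
  ultimately show ?case using countable_subset by blast
qed

lemma E_class_countable: "countable {y. E y x}"
proof -
  have "{y. E y x} = (\<Union>n. {y. (turing_equiv_real ^^ n) y x})"
    unfolding E_def by (auto simp: rtranclp_power)
  then show ?thesis using pow_countable by auto
qed

lemma E_closed: "turing_closed {y. \<exists>x\<in>X. E y x}"
  unfolding turing_closed_def using E_step by blast


lemma lepoll_card: "A \<lesssim> B \<longleftrightarrow> |A| \<le>o |B|"
  unfolding lepoll_def card_of_ordLeq[symmetric] by blast

lemma countable_lepoll_nat: "countable A \<Longrightarrow> A \<lesssim> (UNIV::nat set)"
  unfolding countable_def lepoll_def by blast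

lemma union_lepoll_infinite:
  assumes "infinite K" "I \<lesssim> K" "\<forall>i\<in>I. A i \<lesssim> K"
  shows "(\<Union>i\<in>I. A i) \<lesssim> K"
  using card_of_UNION_ordLeq_infinite[of K I A] assms by (simp add: lepoll_card)

lemma small_union:
  assumes nI: "\<not> (UNIV::real set) \<lesssim> I" and c: "\<forall>i\<in>I. countable (A i)"
  shows "\<not> (UNIV::real set) \<lesssim> (\<Union>i\<in>I. A i)"
proof (cases "finite I")
  case True
  then have "countable (\<Union>i\<in>I. A i)" using c by (simp add: countable_finite)
  then show ?thesis using countable_lepoll uncountable_UNIV_real by blast
next
  case False
  have "\<forall>i\<in>I. A i \<lesssim> I"
    using c countable_lepoll_nat False infinite_le_lepoll lepoll_trans by blast
  then have "(\<Union>i\<in>I. A i) \<lesssim> I" using union_lepoll_infinite[OF False] by blast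
  then show ?thesis using nI lepoll_trans by blast
qed

lemma RxR: "(UNIV::(real\<times>real) set) \<lesssim> (UNIV::real set)"
proof -
  have "|(UNIV::real set) \<times> (UNIV::real set)| =o |(UNIV::real set)|"
  proof -
    have "|UNIV::real set| \<le>o |UNIV::real set|" by (rule card_of_mono1) simp
    then show ?thesis
      using card_of_Times_infinite[of "UNIV::real set" "UNIV::real set"] infinite_UNIV_char_0
      by blast
  qed
  then show ?thesis by (simp add: lepoll_card ordIso_iff_ordLeq)
qed

type_synonym idx = "real \<times> real \<times> real"

lemma idx_lepoll: "(UNIV::idx set) \<lesssim> (UNIV::real set)"
proof -
  have "(UNIV::real set) \<times> (UNIV::(real\<times>real) set) \<lesssim> (UNIV::real set) \<times> (UNIV::real set)"
    by (rule times_lepoll_mono[OF lepoll_refl RxR])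
  then have "(UNIV::idx set) \<lesssim> (UNIV::(real\<times>real) set)" by (simp only: UNIV_Times_UNIV)
  then show ?thesis by (rule lepoll_trans[OF _ RxR])
qed

definition W :: "(idx \<times> idx) set" where "W = |UNIV :: idx set|"

lemma W_wo: "well_order_on UNIV W"
  unfolding W_def using card_of_well_order_on by blast

lemma W_wf: "wf (W - Id)" using W_wo by (simp add: well_order_on_def)

lemma W_total: "a \<noteq> b \<Longrightarrow> (a,b) \<in> W \<or> (b,a) \<in> W"
  using W_wo unfolding well_order_on_def linear_order_on_def total_on_def by blast

lemma W_small: "\<not> (UNIV::real set) \<lesssim> underS W a"
proof
  assume "(UNIV::real set) \<lesssim> underS W a"
  then have "(UNIV::idx set) \<lesssim> underS W a" using idx_lepoll lepoll_trans by blast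
  then have "|UNIV::idx set| \<le>o |underS W a|" by (simp add: lepoll_card)
  moreover have "|underS W a| <o W"
    unfolding W_def by (rule card_of_underS[OF card_of_Card_order]) (simp add: Field_card_of)
  ultimately show False unfolding W_def using not_ordLess_ordLeq by blast
qed

definition ival :: "idx \<Rightarrow> real set" where
  "ival i = (case i of (a,b,_) \<Rightarrow> if a < b then {a<..<b} else UNIV)"

lemma ival_eqpoll: "ival i \<approx> (UNIV::real set)"
  by (cases i) (auto simp: ival_def open_interval_eqpoll_reals)

definition H :: "(idx \<Rightarrow> real) \<Rightarrow> idx \<Rightarrow> real" where
  "H g a = (SOME y. y \<in> ival a \<and> (\<forall>b. (b,a) \<in> W - Id \<longrightarrow> \<not> E y (g b)))"

definition fsel :: "idx \<Rightarrow> real" where "fsel = wfrec (W - Id) H"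

lemma H_ex: "\<exists>y. y \<in> ival a \<and> (\<forall>b. (b,a) \<in> W - Id \<longrightarrow> \<not> E y (g b))"
proof -
  let ?U = "\<Union>b\<in>underS W a. {y. E y (g b)}"
  have nU: "\<not> (UNIV::real set) \<lesssim> ?U"
    by (rule small_union[OF W_small]) (simp add: E_class_countable)
  have "\<not> ival a \<subseteq> ?U"
  proof
    assume "ival a \<subseteq> ?U"
    then have "ival a \<lesssim> ?U" by (rule subset_imp_lepoll)
    moreover have "(UNIV::real set) \<lesssim> ival a" using ival_eqpoll[of a] eqpoll_sym eqpoll_imp_lepoll by blast
    ultimately show False using lepoll_trans nU by blast
  qed
  then obtain y where "y \<in> ival a" "y \<notin> ?U" by blast
  then show ?thesis by (auto simp: underS_def)
qed

lemma fsel_prop: "fsel a \<in> ival a \<and> (\<forall>b. (b,a) \<in> W - Id \<longrightarrow> \<not> E (fsel a) (fsel b))"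
proof -
  have "fsel a = H (cut fsel (W - Id) a) a"
    unfolding fsel_def by (rule wfrec[OF W_wf])
  also have "\<dots> = H fsel a"
    unfolding H_def by (simp add: cut_def)
  finally have eq: "fsel a = H fsel a" .
  have "H fsel a \<in> ival a \<and> (\<forall>b. (b,a) \<in> W - Id \<longrightarrow> \<not> E (H fsel a) (fsel b))"
    unfolding H_def by (rule someI_ex[OF H_ex])
  then show ?thesis by (simp only: eq[symmetric]) blast
qed

lemma fsel_ind: assumes "a \<noteq> b" shows "\<not> E (fsel a) (fsel b)"
proof -
  consider "(a,b) \<in> W" | "(b,a) \<in> W" using W_total[OF assms] by blast
  then show ?thesis
  proof cases
    case 1
    then have "(a,b) \<in> W - Id" using assms by simp
    then have "\<not> E (fsel b) (fsel a)" using fsel_prop[of b] by blast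
    then show ?thesis using E_sym by blast
  next
    case 2
    then have "(b,a) \<in> W - Id" using assms by simp
    then show ?thesis using fsel_prop[of a] by blast
  qed
qed

lemma fsel_inj: "inj fsel"
proof (rule injI)
  fix a b assume h: "fsel a = fsel b"
  show "a = b"
  proof (rule ccontr)
    assume "a \<noteq> b"
    then have "\<not> E (fsel a) (fsel b)" by (rule fsel_ind)
    then show False using h E_refl by simp
  qed
qed

definition Asat :: "real set \<Rightarrow> real set" where
  "Asat S = {y. \<exists>x \<in> {fsel (a,b,r) | a b r. a < b} \<union> {fsel (1,0,r) | r. r \<in> S}. E y x}"

lemma Asat_closed: "turing_closed (Asat S)"
  unfolding Asat_def by (rule E_closed)

lemma Asat_mem: "fsel (1,0,r) \<in> Asat S \<longleftrightarrow> r \<in> S"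
proof
  assume "fsel (1,0,r) \<in> Asat S"
  then obtain x where x: "x \<in> {fsel (a,b,r) | a b r. a < b} \<union> {fsel (1,0,r) | r. r \<in> S}"
    and e: "E (fsel (1,0,r)) x" unfolding Asat_def by blast
  from x show "r \<in> S"
  proof
    assume "x \<in> {fsel (a,b,r) | a b r. a < b}"
    then obtain a b r' where "x = fsel (a,b,r')" "a < b" by blast
    then show ?thesis using e fsel_ind[of "(1,0,r)" "(a,b,r')"] by auto
  next
    assume "x \<in> {fsel (1,0,r) | r. r \<in> S}"
    then obtain r' where "x = fsel (1,0,r')" "r' \<in> S" by blast
    then show ?thesis using e fsel_ind[of "(1,0,r)" "(1,0,r')"] by (cases "r = r'") auto
  qed
next
  assume "r \<in> S" then show "fsel (1,0,r) \<in> Asat S" unfolding Asat_def using E_refl by blast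
qed

lemma Asat_inj: "inj Asat"
proof (rule injI)
  fix S T assume "Asat S = Asat T"
  then have "r \<in> S \<longleftrightarrow> r \<in> T" for r using Asat_mem[of r S] Asat_mem[of r T] by simp
  then show "S = T" by blast
qed

lemma Asat_dense: "c_dense (Asat S)"
  unfolding c_dense_def
proof (intro allI impI)
  fix a b :: real assume ab: "a < b"
  have sub: "range (\<lambda>r. fsel (a,b,r)) \<subseteq> {a<..<b} \<inter> Asat S"
  proof
    fix y assume "y \<in> range (\<lambda>r. fsel (a,b,r))"
    then obtain r where y: "y = fsel (a,b,r)" by blast
    have "y \<in> ival (a,b,r)" using fsel_prop y by blast
    then have "y \<in> {a<..<b}" using ab by (simp add: ival_def)
    moreover have "fsel (a,b,r) \<in> {fsel (a,b,r) | a b r. a < b}" using ab by blast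
    then have "y \<in> Asat S" unfolding Asat_def using y E_refl[of y] by blast
    ultimately show "y \<in> {a<..<b} \<inter> Asat S" by blast
  qed
  have "inj (\<lambda>r. fsel (a,b,r))"
  proof (rule injI)
    fix r r' assume "fsel (a,b,r) = fsel (a,b,r')"
    then have "(a,b,r) = (a,b,r')" using fsel_inj by (rule injD[rotated])
    then show "r = r'" by simp
  qed
  then have "(UNIV::real set) \<lesssim> {a<..<b} \<inter> Asat S"
    using sub unfolding lepoll_def by blast
  then show "{a<..<b} \<inter> Asat S \<approx> (UNIV::real set)"
    by (rule lepoll_antisym[OF subset_imp_lepoll[OF subset_UNIV]])
qed


lemma smo_less_iff:
  fixes f :: "real \<Rightarrow> real"
  assumes "strict_mono_on A f" "x \<in> A" "y \<in> A"
  shows "f x < f y \<longleftrightarrow> x < y"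
proof
  assume "x < y" then show "f x < f y" using assms by (simp add: strict_mono_on_def)
next
  assume fl: "f x < f y"
  show "x < y"
  proof (rule ccontr)
    assume "\<not> x < y"
    then consider "x = y" | "y < x" by linarith
    then show False
    proof cases
      case 1 then show False using fl by simp
    next
      case 2 then have "f y < f x" using assms by (simp add: strict_mono_on_def)
      then show False using fl by simp
    qed
  qed
qed

lemma iso_refl: "order_iso_sets A A"
  unfolding order_iso_sets_def
  by (rule exI[of _ id]) (simp add: strict_mono_on_def)

lemma iso_sym: assumes "order_iso_sets A B" shows "order_iso_sets B A"
proof -
  from assms obtain f where bf: "bij_betw f A B" and sf: "strict_mono_on A f"
    unfolding order_iso_sets_def by blast
  let ?g = "the_inv_into A f"
  have bg: "bij_betw ?g B A" using bf by (rule bij_betw_the_inv_into)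
  have inj: "inj_on f A" using bf by (simp add: bij_betw_def)
  have img: "f ` A = B" using bf by (simp add: bij_betw_def)
  have "strict_mono_on B ?g"
    unfolding strict_mono_on_def
  proof (intro allI impI)
    fix r s assume h: "r \<in> B \<and> s \<in> B \<and> r < s"
    have gr: "?g r \<in> A" "?g s \<in> A" using bg h by (auto simp: bij_betw_def)
    have "f (?g r) = r" "f (?g s) = s" using h img f_the_inv_into_f[OF inj] by auto
    then show "?g r < ?g s" using smo_less_iff[OF sf gr] h by simp
  qed
  then show ?thesis using bg unfolding order_iso_sets_def by blast
qed

lemma iso_trans: assumes "order_iso_sets A B" "order_iso_sets B C" shows "order_iso_sets A C"
proof -
  from assms obtain f g where bf: "bij_betw f A B" and sf: "strict_mono_on A f"
    and bg: "bij_betw g B C" and sg: "strict_mono_on B g"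
    unfolding order_iso_sets_def by blast
  have "bij_betw (g \<circ> f) A C" using bf bg by (rule bij_betw_trans)
  moreover have "strict_mono_on A (g \<circ> f)"
    unfolding strict_mono_on_def
  proof (intro allI impI)
    fix r s assume h: "r \<in> A \<and> s \<in> A \<and> r < s"
    then have "f r \<in> B" "f s \<in> B" "f r < f s" using bf sf by (auto simp: bij_betw_def strict_mono_on_def)
    then show "(g \<circ> f) r < (g \<circ> f) s" using sg by (simp add: strict_mono_on_def)
  qed
  ultimately show ?thesis unfolding order_iso_sets_def by blast
qed

definition dense_set :: "real set \<Rightarrow> bool" where
  "dense_set A \<longleftrightarrow> (\<forall>a b. a < b \<longrightarrow> (\<exists>x\<in>A. a < x \<and> x < b))"

lemma c_dense_dense: assumes "c_dense A" shows "dense_set A"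
  unfolding dense_set_def
proof (intro allI impI)
  fix a b :: real assume "a < b"
  then have "{a<..<b} \<inter> A \<approx> (UNIV::real set)" using assms by (simp add: c_dense_def)
  then have "{a<..<b} \<inter> A \<noteq> {}" using eqpoll_sym eqpoll_empty_iff_empty by fastforce
  then show "\<exists>x\<in>A. a < x \<and> x < b" by auto
qed

lemma countable_dense_subset:
  assumes "dense_set A" shows "\<exists>D \<subseteq> A. countable D \<and> dense_set D"
proof -
  let ?Q = "{(p,q). p \<in> \<rat> \<and> q \<in> \<rat> \<and> p < (q::real)}"
  let ?c = "\<lambda>(p,q). SOME y. y \<in> A \<and> p < y \<and> y < q"
  have cq: "?c (p,q) \<in> A \<and> p < ?c (p,q) \<and> ?c (p,q) < q" if "p < q" for p q
  proof -
    have "\<exists>y. y \<in> A \<and> p < y \<and> y < q" using assms that by (auto simp: dense_set_def)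
    then have "(SOME y. y \<in> A \<and> p < y \<and> y < q) \<in> A \<and> p < (SOME y. y \<in> A \<and> p < y \<and> y < q) \<and> (SOME y. y \<in> A \<and> p < y \<and> y < q) < q"
      by (rule someI_ex)
    then show ?thesis by simp
  qed
  have "?Q \<subseteq> \<rat> \<times> \<rat>" by auto
  moreover have "countable (\<rat> \<times> \<rat>)" by (simp add: countable_rat)
  ultimately have "countable ?Q" using countable_subset by blast
  then have cD: "countable (?c ` ?Q)" by (rule countable_image)
  have sD: "?c ` ?Q \<subseteq> A" using cq by auto
  have "dense_set (?c ` ?Q)"
    unfolding dense_set_def
  proof (intro allI impI)
    fix a b :: real assume "a < b"
    then obtain p where p: "p \<in> \<rat>" "a < p" "p < b" using Rats_dense_in_real by blast
    then obtain q where q: "q \<in> \<rat>" "p < q" "q < b" using Rats_dense_in_real by blast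
    have "(p,q) \<in> ?Q" using p q by auto
    moreover have "a < ?c (p,q) \<and> ?c (p,q) < b" using cq[of p q] p q by auto
    ultimately show "\<exists>x\<in>?c ` ?Q. a < x \<and> x < b" by blast
  qed
  then show ?thesis using cD sD by blast
qed

lemma iso_unique_side:
  fixes f g :: "real \<Rightarrow> real"
  assumes sf: "strict_mono_on A f" and sg: "strict_mono_on A g"
    and DA: "D \<subseteq> A" and dD: "dense_set D" and dg: "dense_set (g ` A)"
    and eq: "\<forall>d\<in>D. f d = g d" and x: "x \<in> A"
  shows "\<not> f x < g x"
proof
  assume lt: "f x < g x"
  have "\<exists>b\<in>g ` A. f x < b \<and> b < g x" using dg lt unfolding dense_set_def by blast
  then obtain b where b: "b \<in> g ` A" "f x < b" "b < g x" by blast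
  then obtain a where a: "a \<in> A" "b = g a" by blast
  have ax: "a < x" using smo_less_iff[OF sg a(1) x] a b by simp
  then obtain d where d: "d \<in> D" "a < d" "d < x" using dD by (auto simp: dense_set_def)
  have dA: "d \<in> A" using d DA by blast
  have "f d < f x" using smo_less_iff[OF sf dA x] d by simp
  moreover have "g a < g d" using smo_less_iff[OF sg a(1) dA] d by simp
  moreover have "f d = g d" using eq d(1) by blast
  ultimately show False using b(2,3) a(2) by linarith
qed

lemma iso_unique:
  fixes f g :: "real \<Rightarrow> real"
  assumes sf: "strict_mono_on A f" and sg: "strict_mono_on A g"
    and DA: "D \<subseteq> A" and dD: "dense_set D" and df: "dense_set (f ` A)" and dg: "dense_set (g ` A)"
    and eq: "\<forall>d\<in>D. f d = g d" and x: "x \<in> A"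
  shows "f x = g x"
proof -
  have "\<forall>d\<in>D. g d = f d" using eq by simp
  then show ?thesis
    using iso_unique_side[OF sf sg DA dD dg eq x] iso_unique_side[OF sg sf DA dD df _ x] by linarith
qed

lemma cls_small:
  assumes A: "c_dense A"
  shows "{B. c_dense B \<and> order_iso_sets A B} \<lesssim> (UNIV::real set)"
proof -
  obtain D where DA: "D \<subseteq> A" and cD: "countable D" and dD: "dense_set D"
    using countable_dense_subset[OF c_dense_dense[OF A]] by blast
  let ?cls = "{B. c_dense B \<and> order_iso_sets A B}"
  define fi :: "real set \<Rightarrow> real \<Rightarrow> real" where "fi B = (SOME f. bij_betw f A B \<and> strict_mono_on A f)" for B
  have fi: "bij_betw (fi B) A B \<and> strict_mono_on A (fi B)" if "B \<in> ?cls" for B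
  proof -
    have "\<exists>f. bij_betw f A B \<and> strict_mono_on A f" using that by (simp add: order_iso_sets_def)
    then show ?thesis unfolding fi_def by (rule someI_ex)
  qed
  define phi where "phi B = {(d,k). d \<in> D \<and> rat_code k < fi B d}" for B
  have "inj_on phi ?cls"
  proof (rule inj_onI)
    fix B1 B2 assume B1: "B1 \<in> ?cls" and B2: "B2 \<in> ?cls" and eq: "phi B1 = phi B2"
    have eqD: "\<forall>d\<in>D. fi B1 d = fi B2 d"
    proof
      fix d assume d: "d \<in> D"
      have "left_cut (fi B1 d) = {k. (d,k) \<in> phi B1}" using d by (auto simp: phi_def left_cut_def)
      also have "\<dots> = left_cut (fi B2 d)" using d eq by (auto simp: phi_def left_cut_def)
      finally show "fi B1 d = fi B2 d" by (rule injD[OF left_cut_inj])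
    qed
    have f1: "bij_betw (fi B1) A B1 \<and> strict_mono_on A (fi B1)" using fi B1 by blast
    have f2: "bij_betw (fi B2) A B2 \<and> strict_mono_on A (fi B2)" using fi B2 by blast
    have i1: "fi B1 ` A = B1" "fi B2 ` A = B2" using f1 f2 by (auto simp: bij_betw_def)
    have "c_dense B1" "c_dense B2" using B1 B2 by auto
    then have d1: "dense_set (fi B1 ` A)" "dense_set (fi B2 ` A)" using i1 c_dense_dense by auto
    have s1: "strict_mono_on A (fi B1)" "strict_mono_on A (fi B2)" using f1 f2 by auto
    have "\<forall>x\<in>A. fi B1 x = fi B2 x"
      using iso_unique[OF s1(1) s1(2) DA dD d1(1) d1(2) eqD] by blast
    then have "fi B1 ` A = fi B2 ` A" by (intro image_cong) auto
    then show "B1 = B2" using i1 by simp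
  qed
  moreover have "phi ` ?cls \<subseteq> Pow (D \<times> (UNIV::nat set))" by (auto simp: phi_def)
  ultimately have l1: "?cls \<lesssim> Pow (D \<times> (UNIV::nat set))" unfolding lepoll_def by blast
  have "countable (D \<times> (UNIV::nat set))" using cD by simp
  then obtain h :: "real \<times> nat \<Rightarrow> nat" where "inj_on h (D \<times> UNIV)"
    unfolding countable_def by blast
  then have "inj_on (image h) (Pow (D \<times> UNIV))" by (rule inj_on_image_Pow)
  then have l2: "Pow (D \<times> (UNIV::nat set)) \<lesssim> (UNIV::nat set set)" unfolding lepoll_def by blast
  have l3: "(UNIV::nat set set) \<lesssim> (UNIV::real set)"
    using nat_sets_eqpoll_reals eqpoll_imp_lepoll by blast
  show ?thesis by (rule lepoll_trans[OF lepoll_trans[OF l1 l2] l3])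
qed


theorem mainTheorem11:
  shows "\<exists>F :: real set set. F \<approx> Pow (UNIV :: real set)
           \<and> (\<forall>A \<in> F. c_dense A \<and> turing_closed A)
           \<and> (\<forall>A \<in> F. \<forall>B \<in> F. A \<noteq> B \<longrightarrow> \<not> order_iso_sets A B)"
proof -
  let ?G = "range Asat"
  let ?cl = "\<lambda>A. {C \<in> ?G. order_iso_sets A C}"
  define rho where "rho A = (SOME B. B \<in> ?cl A)" for A
  have cls_eq: "?cl A = ?cl A'" if h: "order_iso_sets A A'" for A A'
  proof (intro Collect_cong conj_cong refl iffI)
    fix C assume "order_iso_sets A C" then show "order_iso_sets A' C" using iso_trans[OF iso_sym[OF h]] by blast
  next
    fix C assume "order_iso_sets A' C" then show "order_iso_sets A C" using iso_trans[OF h] by blast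
  qed
  have rho_in: "rho A \<in> ?G \<and> order_iso_sets A (rho A)" if "A \<in> ?G" for A
  proof -
    have "A \<in> ?cl A" using that iso_refl by blast
    then have "rho A \<in> ?cl A" unfolding rho_def by (rule someI)
    then show ?thesis by blast
  qed
  have rho_eq: "rho A = rho A'" if h: "order_iso_sets A A'" for A A'
    unfolding rho_def by (subst cls_eq[OF h]) (rule refl)
  define F where "F = rho ` ?G"
  have FG: "F \<subseteq> ?G" unfolding F_def using rho_in by blast
  have props: "\<forall>A \<in> F. c_dense A \<and> turing_closed A"
  proof
    fix A assume "A \<in> F"
    then obtain S where "A = Asat S" using FG by blast
    then show "c_dense A \<and> turing_closed A" using Asat_dense Asat_closed by simp
  qed
  have pw: "\<forall>A \<in> F. \<forall>B \<in> F. A \<noteq> B \<longrightarrow> \<not> order_iso_sets A B"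
  proof (intro ballI impI notI)
    fix A B assume A: "A \<in> F" and B: "B \<in> F" and ne: "A \<noteq> B" and iso: "order_iso_sets A B"
    obtain A1 where A1: "A1 \<in> ?G" "A = rho A1" using A F_def by blast
    obtain B1 where B1: "B1 \<in> ?G" "B = rho B1" using B F_def by blast
    have "order_iso_sets A1 A" using rho_in[OF A1(1)] A1(2) by simp
    moreover have "order_iso_sets B B1" using rho_in[OF B1(1)] B1(2) iso_sym by simp
    ultimately have "order_iso_sets A1 B1" using iso iso_trans by blast
    then have "rho A1 = rho B1" by (rule rho_eq)
    then show False using ne A1 B1 by simp
  qed
  have Geq: "?G \<approx> (UNIV :: real set set)"
    using inj_on_image_eqpoll_self[of Asat UNIV] Asat_inj by simp
  let ?U = "\<Union>B\<in>F. {C. c_dense C \<and> order_iso_sets B C}"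
  have cover: "?G \<subseteq> ?U"
  proof
    fix A assume A: "A \<in> ?G"
    then have "rho A \<in> F" unfolding F_def by blast
    moreover have "order_iso_sets (rho A) A" using rho_in[OF A] iso_sym by blast
    moreover have "c_dense A" using A Asat_dense by blast
    ultimately show "A \<in> ?U" by blast
  qed
  have clsF: "\<forall>B\<in>F. {C. c_dense C \<and> order_iso_sets B C} \<lesssim> (UNIV::real set)"
  proof
    fix B assume "B \<in> F"
    then have "c_dense B" using props by blast
    then show "{C. c_dense C \<and> order_iso_sets B C} \<lesssim> (UNIV::real set)" by (rule cls_small)
  qed
  have GU: "(UNIV :: real set set) \<lesssim> ?U"
    by (rule lepoll_trans[OF eqpoll_imp_lepoll[OF eqpoll_sym[OF Geq]] subset_imp_lepoll[OF cover]])
  have infR: "infinite (UNIV::real set)" by (rule infinite_UNIV_char_0)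
  have tot: "F \<lesssim> (UNIV::real set) \<or> (UNIV::real set) \<lesssim> F"
    unfolding lepoll_card by (rule ordLeq_total[OF card_of_Well_order card_of_Well_order])
  have big: "(UNIV :: real set set) \<lesssim> F"
  proof (cases "(UNIV::real set) \<lesssim> F")
    case True
    have "(UNIV::nat set) \<lesssim> (UNIV::real set)" using infR infinite_le_lepoll by blast
    then have "(UNIV::nat set) \<lesssim> F" using True by (rule lepoll_trans)
    then have infF: "infinite F" using infinite_le_lepoll by blast
    have "\<forall>B\<in>F. {C. c_dense C \<and> order_iso_sets B C} \<lesssim> F"
      using clsF lepoll_trans[OF _ True] by blast
    then have "?U \<lesssim> F" by (rule union_lepoll_infinite[OF infF lepoll_refl])
    then show ?thesis by (rule lepoll_trans[OF GU])
  next
    case False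
    then have "F \<lesssim> (UNIV::real set)" using tot by blast
    then have "?U \<lesssim> (UNIV::real set)" by (rule union_lepoll_infinite[OF infR _ clsF])
    then have "(UNIV :: real set set) \<lesssim> (UNIV::real set)" by (rule lepoll_trans[OF GU])
    then have "Pow (UNIV::real set) \<lesssim> (UNIV::real set)" by simp
    then have "(UNIV::real set) \<approx> Pow (UNIV::real set)" by (rule lepoll_antisym[OF lepoll_Pow_self])
    moreover have "(UNIV::real set) \<prec> Pow (UNIV::real set)" by (rule lesspoll_Pow_self)
    ultimately have False unfolding lesspoll_def by blast
    then show ?thesis ..
  qed
  have "F \<approx> Pow (UNIV :: real set)"
    using lepoll_antisym[OF subset_imp_lepoll[of F "Pow UNIV"]] big by auto
  then show ?thesis using props pw by blast
qed

end
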